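(* Let $\mathcal H$ be the Hessian of an admissible Hamiltonian. Then, wherever $I-\varepsilon^2(\mathcal HJ(x))^2$ is invertible, there are unique functions $r_0(x,\varepsilon),\dots,r_{n-1}(x,\varepsilon)$ (rational in $x$ and $\varepsilon$) with $$\big(I-\varepsilon^2(\mathcal HJ(x))^2\big)^{-1}=\sum_{i=0}^{n-1}r_i(x,\varepsilon)A^i,$$ and they satisfy $\nabla_x r_{i-1}(x,\varepsilon)=A\,\nabla_x r_i(x,\varepsilon)$ for $i=1,\dots,n-1$.
   Context: Fix an integer $n\ge 2$. Points of $\mathbb R^{2n}$ are $x=(x_1,\dots,x_{2n})^{T}$; write $u=(x_1,\dots,x_n)^T$. Let $X(u)$ be the $n\times n$ matrix with entries $X(u)_{ij}=x_{k}$ where $k\in\{1,\dots,n\}$, $k\equiv i+j-1 \pmod n$, and let $J(x)=\begin{pmatrix}0&X(u)\\-X(u)&0\end{pmatrix}$. Let $\mathcal P$ be the $n\times n$ cyclic shift matrix ($\mathcal P_{i,i+1}=1$ for $1\le i\le n-1$, $\mathcal P_{n,1}=1$, all other entries $0$) and $A=\begin{pmatrix}\mathcal P&0\\0&\mathcal P\end{pmatrix}$; the matrices $I,A,\dots,A^{n-1}$ are linearly independent. An admissible Hamiltonian is a homogeneous quadratic form $H(x)=\tfrac12 x^T\mathcal H x$ with a constant symmetric matrix $\mathcal H=\nabla^2H$ satisfying $A\mathcal H=\mathcal H A^T$. *)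

theory Defs
  imports "HOL-Analysis.Analysis" "Jordan_Normal_Form.Matrix"
begin

text \<open>All indices are 0-based. X(u)_{ij} = x_k with k = (i+j) mod n (0-based),
  which is the paper's k = i+j-1 mod n in 1-based indexing.\<close>
definition Xmat :: "nat \<Rightarrow> real vec \<Rightarrow> real mat" where
  "Xmat n x = mat n n (\<lambda>(i,j). x $ ((i + j) mod n))"

definition Jmat :: "nat \<Rightarrow> real vec \<Rightarrow> real mat" where
  "Jmat n x = four_block_mat (0\<^sub>m n n) (Xmat n x) (- Xmat n x) (0\<^sub>m n n)"

definition Pshift :: "nat \<Rightarrow> real mat" where
  "Pshift n = mat n n (\<lambda>(i,j). if j = Suc i mod n then 1 else 0)"

definition Amat :: "nat \<Rightarrow> real mat" where
  "Amat n = four_block_mat (Pshift n) (0\<^sub>m n n) (0\<^sub>m n n) (Pshift n)"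

definition admissible_hessian :: "nat \<Rightarrow> real mat \<Rightarrow> bool" where
  "admissible_hessian n H \<longleftrightarrow> H \<in> carrier_mat (2*n) (2*n) \<and> transpose_mat H = H
     \<and> Amat n * H = H * transpose_mat (Amat n)"

definition Mmat :: "nat \<Rightarrow> real mat \<Rightarrow> real vec \<Rightarrow> real \<Rightarrow> real mat" where
  "Mmat n H x eps = 1\<^sub>m (2*n) - (eps^2) \<cdot>\<^sub>m ((H * Jmat n x) * (H * Jmat n x))"

definition is_inverse_of :: "real mat \<Rightarrow> real mat \<Rightarrow> bool" where
  "is_inverse_of B M \<longleftrightarrow> inverts_mat M B \<and> inverts_mat B M"

definition pow_comb :: "(nat \<Rightarrow> real) \<Rightarrow> real mat \<Rightarrow> nat \<Rightarrow> real mat" where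
  "pow_comb c B m = mat (dim_row B) (dim_col B) (\<lambda>ij. \<Sum>i<m. c i * (B ^\<^sub>m i) $$ ij)"

definition has_gradient :: "(real vec \<Rightarrow> real) \<Rightarrow> nat \<Rightarrow> real vec \<Rightarrow> real vec \<Rightarrow> bool" where
  "has_gradient f m x g \<longleftrightarrow> dim_vec g = m \<and>
     (\<forall>k<m. ((\<lambda>t. f (x + t \<cdot>\<^sub>v unit_vec m k)) has_real_derivative (g $ k)) (at 0))"

end

theory Submission
  imports Defs "Jordan_Normal_Form.Determinant"
begin

lemma P_carrier[simp]: "Pshift n \<in> carrier_mat n n" by (simp add: Pshift_def)
lemma P_dims[simp]: "dim_row (Pshift n) = n" "dim_col (Pshift n) = n" by (simp_all add: Pshift_def)

lemma mult_entry: assumes "A \<in> carrier_mat nr m" "B \<in> carrier_mat m nc" "i < nr" "j < nc"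
  shows "(A * B) $$ (i,j) = (\<Sum>l\<in>{0..<m}. A $$ (i,l) * B $$ (l,j))"
  using assms by (auto simp: scalar_prod_def intro!: sum.cong)

lemma P_entry: "i < n \<Longrightarrow> j < n \<Longrightarrow> Pshift n $$ (i,j) = (if j = Suc i mod n then 1 else 0)"
  by (simp add: Pshift_def)

lemma PY: assumes Y: "Y \<in> carrier_mat n n" and i: "i < n" and j: "j < n"
  shows "(Pshift n * Y) $$ (i,j) = Y $$ (Suc i mod n, j)"
proof -
  have "(Pshift n * Y) $$ (i,j) = (\<Sum>l\<in>{0..<n}. Pshift n $$ (i,l) * Y $$ (l,j))"
    by (rule mult_entry) (use Y i j in auto)
  also have "\<dots> = (\<Sum>l\<in>{0..<n}. if l = Suc i mod n then Y $$ (l,j) else 0)"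
    by (rule sum.cong) (auto simp: P_entry i)
  also have "\<dots> = Y $$ (Suc i mod n, j)" using i by (simp add: sum.delta)
  finally show ?thesis .
qed

lemma mod_pred_iff: fixes n l j :: nat assumes "l < n" "j < n"
  shows "(j = Suc l mod n) = (l = nat ((int j - 1) mod int n))"
proof -
  have n: "n > 0" using assms by auto
  have "(j = Suc l mod n) = (int j = (int l + 1) mod int n)"
    by (metis of_nat_Suc of_nat_eq_iff of_nat_mod add.commute)
  also have "\<dots> = (int l = (int j - 1) mod int n)"
  proof
    assume h: "int j = (int l + 1) mod int n"
    have "(int j - 1) mod int n = ((int l + 1) mod int n - 1) mod int n" by (simp add: h)
    also have "\<dots> = int l" using assms by (simp add: mod_simps)
    finally show "int l = (int j - 1) mod int n" by simp
  next
    assume h: "int l = (int j - 1) mod int n"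
    have "(int l + 1) mod int n = ((int j - 1) mod int n + 1) mod int n" by (simp add: h)
    also have "\<dots> = int j" using assms by (simp add: mod_simps)
    finally show "int j = (int l + 1) mod int n" by simp
  qed
  also have "\<dots> = (l = nat ((int j - 1) mod int n))" using n by auto
  finally show ?thesis .
qed

lemma YP: assumes Y: "Y \<in> carrier_mat n n" and i: "i < n" and j: "j < n"
  shows "(Y * Pshift n) $$ (i,j) = Y $$ (i, nat ((int j - 1) mod int n))"
proof -
  have n: "n > 0" using i by auto
  have "(Y * Pshift n) $$ (i,j) = (\<Sum>l\<in>{0..<n}. Y $$ (i,l) * Pshift n $$ (l,j))"
    by (rule mult_entry) (use Y i j in auto)
  also have "\<dots> = (\<Sum>l\<in>{0..<n}. if l = nat ((int j - 1) mod int n) then Y $$ (i,l) else 0)"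
    by (rule sum.cong) (auto simp: P_entry j mod_pred_iff)
  also have "\<dots> = Y $$ (i, nat ((int j - 1) mod int n))" using n
    by (simp add: sum.delta nat_less_iff)
  finally show ?thesis .
qed

lemma YPt: assumes Y: "Y \<in> carrier_mat n n" and i: "i < n" and j: "j < n"
  shows "(Y * transpose_mat (Pshift n)) $$ (i,j) = Y $$ (i, Suc j mod n)"
proof -
  have "(Y * transpose_mat (Pshift n)) $$ (i,j) = (\<Sum>l\<in>{0..<n}. Y $$ (i,l) * transpose_mat (Pshift n) $$ (l,j))"
    by (rule mult_entry) (use Y i j in auto)
  also have "\<dots> = (\<Sum>l\<in>{0..<n}. if l = Suc j mod n then Y $$ (i,l) else 0)"
    by (rule sum.cong) (auto simp: P_entry j)
  also have "\<dots> = Y $$ (i, Suc j mod n)" using i by (simp add: sum.delta)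
  finally show ?thesis .
qed

lemma nat_mod_int[simp]: "n > 0 \<Longrightarrow> int (nat (x mod int n)) = x mod int n" by simp

lemma Suc_mod_inj: "i < n \<Longrightarrow> j < n \<Longrightarrow> (Suc i mod n = Suc j mod n) = (i = j)"
  by (metis mod_pred_iff mod_less_divisor zero_less_iff_neq_zero not_less0 less_nat_zero_code mod_Suc_eq)

lemma PPt: "Pshift n * transpose_mat (Pshift n) = 1\<^sub>m n"
proof (rule eq_matI)
  fix i j assume i: "i < dim_row (1\<^sub>m n :: real mat)" and j: "j < dim_col (1\<^sub>m n :: real mat)"
  hence i: "i < n" and j: "j < n" by auto
  have "(Pshift n * transpose_mat (Pshift n)) $$ (i,j) = Pshift n $$ (j, Suc i mod n)"
    using PY[of "transpose_mat (Pshift n)" n i j] i j by auto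
  also have "\<dots> = 1\<^sub>m n $$ (i,j)" using i j by (auto simp: P_entry Suc_mod_inj)
  finally show "(Pshift n * transpose_mat (Pshift n)) $$ (i,j) = 1\<^sub>m n $$ (i,j)" .
qed auto

lemma PtP: "transpose_mat (Pshift n) * Pshift n = 1\<^sub>m n"
proof (rule eq_matI)
  fix i j assume i: "i < dim_row (1\<^sub>m n :: real mat)" and j: "j < dim_col (1\<^sub>m n :: real mat)"
  hence i: "i < n" and j: "j < n" by auto
  have n: "n > 0" using i by auto
  define l where "l = nat ((int j - 1) mod int n)"
  have l: "l < n" using n by (simp add: l_def nat_less_iff)
  have jl: "j = Suc l mod n" using mod_pred_iff[OF l j] l_def by simp
  have "(transpose_mat (Pshift n) * Pshift n) $$ (i,j) = Pshift n $$ (l, i)"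
    using YP[of "transpose_mat (Pshift n)" n i j] i j l by (auto simp: l_def)
  also have "\<dots> = 1\<^sub>m n $$ (i,j)" using i j l jl by (auto simp: P_entry)
  finally show "(transpose_mat (Pshift n) * Pshift n) $$ (i,j) = 1\<^sub>m n $$ (i,j)" .
qed auto

definition hankel :: "nat \<Rightarrow> real mat \<Rightarrow> bool" where
  "hankel n K \<longleftrightarrow> K \<in> carrier_mat n n \<and> Pshift n * K = K * transpose_mat (Pshift n)"

definition circulant :: "nat \<Rightarrow> real mat \<Rightarrow> bool" where
  "circulant n C \<longleftrightarrow> C \<in> carrier_mat n n \<and> Pshift n * C = C * Pshift n"

lemma hankel_Pt: assumes "hankel n L" shows "transpose_mat (Pshift n) * L = L * Pshift n"
proof -
  have L: "L \<in> carrier_mat n n" and e: "Pshift n * L = L * transpose_mat (Pshift n)"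
    using assms by (auto simp: hankel_def)
  have Pt: "transpose_mat (Pshift n) \<in> carrier_mat n n" by simp
  have "L * Pshift n = (transpose_mat (Pshift n) * Pshift n) * L * Pshift n"
    using L by (simp add: PtP)
  also have "\<dots> = transpose_mat (Pshift n) * (Pshift n * L) * Pshift n"
    using L Pt by (simp add: assoc_mult_mat[of _ n n _ n _ n])
  also have "\<dots> = transpose_mat (Pshift n) * L * (transpose_mat (Pshift n) * Pshift n)"
    unfolding e using L Pt by (simp add: assoc_mult_mat[of _ n n _ n _ n] mult_carrier_mat[of _ n n _ n])
  also have "\<dots> = transpose_mat (Pshift n) * L" using L Pt by (simp add: PtP)
  finally show ?thesis by simp
qed

lemma hankel_mult: assumes K: "hankel n K" and L: "hankel n L" shows "circulant n (K * L)"
proof -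
  have Kc: "K \<in> carrier_mat n n" and e: "Pshift n * K = K * transpose_mat (Pshift n)"
    using K by (auto simp: hankel_def)
  have Lc: "L \<in> carrier_mat n n" using L by (auto simp: hankel_def)
  have Pt: "transpose_mat (Pshift n) \<in> carrier_mat n n" by simp
  have "Pshift n * (K * L) = (Pshift n * K) * L" using Kc Lc by (simp add: assoc_mult_mat[of _ n n _ n _ n])
  also have "\<dots> = K * (transpose_mat (Pshift n) * L)" unfolding e using Kc Lc Pt
    by (simp add: assoc_mult_mat[of _ n n _ n _ n])
  also have "\<dots> = K * L * Pshift n" unfolding hankel_Pt[OF L] using Kc Lc
    by (simp add: assoc_mult_mat[of _ n n _ n _ n])
  finally show ?thesis using Kc Lc by (auto simp: circulant_def)
qed

lemma circ_step: assumes "circulant n C" "i < n" "j < n"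
  shows "C $$ (Suc i mod n, j) = C $$ (i, nat ((int j - 1) mod int n))"
  using assms PY[of C n i j] YP[of C n i j] by (auto simp: circulant_def)

lemma circ_form: assumes C: "circulant n C" and i: "i < n" and j: "j < n"
  shows "C $$ (i,j) = C $$ (0, nat ((int j - int i) mod int n))"
  using i j
proof (induction i arbitrary: j)
  case 0 thus ?case by simp
next
  case (Suc i)
  have n: "n > 0" using Suc by auto
  define j' where "j' = nat ((int j - 1) mod int n)"
  have j': "j' < n" using n by (simp add: j'_def nat_less_iff)
  have "C $$ (Suc i, j) = C $$ (Suc i mod n, j)" using Suc by simp
  also have "\<dots> = C $$ (i, j')" using circ_step[OF C, of i j] Suc j'_def by simp
  also have "\<dots> = C $$ (0, nat ((int j' - int i) mod int n))" using Suc.IH[OF _ j'] Suc by simp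
  also have "nat ((int j' - int i) mod int n) = nat ((int j - int (Suc i)) mod int n)"
    using n by (simp add: j'_def mod_simps algebra_simps)
  finally show ?case .
qed

lemma circ_comm: assumes C: "circulant n C" and D: "circulant n D"
  shows "C * D = D * C"
proof (rule eq_matI)
  have Cc: "C \<in> carrier_mat n n" and Dc: "D \<in> carrier_mat n n" using C D by (auto simp: circulant_def)
  fix i j assume "i < dim_row (D * C)" "j < dim_col (D * C)"
  hence i: "i < n" and j: "j < n" using Cc Dc by auto
  have n: "n > 0" using i by auto
  define \<phi> where "\<phi> = (\<lambda>l::nat. nat ((int i + int j - int l) mod int n))"
  have phin: "\<phi> l < n" for l using n by (simp add: \<phi>_def nat_less_iff)
  have phiphi: "l < n \<Longrightarrow> \<phi> (\<phi> l) = l" for l using n by (simp add: \<phi>_def mod_simps)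
  have "(C * D) $$ (i,j) = (\<Sum>l\<in>{0..<n}. C $$ (i,l) * D $$ (l,j))"
    by (rule mult_entry) (use Cc Dc i j in auto)
  also have "\<dots> = (\<Sum>l\<in>{0..<n}. D $$ (i,l) * C $$ (l,j))"
  proof (rule sum.reindex_bij_witness[of _ \<phi> \<phi>])
    fix l assume l: "l \<in> {0..<n}"
    show "\<phi> (\<phi> l) = l" using l phiphi by auto
    show "\<phi> l \<in> {0..<n}" using phin by auto
    have e1: "nat ((int (\<phi> l) - int i) mod int n) = nat ((int j - int l) mod int n)"
      using n by (simp add: \<phi>_def mod_simps)
    have e2: "nat ((int j - int (\<phi> l)) mod int n) = nat ((int l - int i) mod int n)"
      using n by (simp add: \<phi>_def mod_simps)
    show "D $$ (i, \<phi> l) * C $$ (\<phi> l, j) = C $$ (i, l) * D $$ (l, j)"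
      using l i j phin
      by (simp add: circ_form[OF C, of i l] circ_form[OF C, of "\<phi> l" j] circ_form[OF D, of i "\<phi> l"]
          circ_form[OF D, of l j] e1 e2)
  next
    fix l assume l: "l \<in> {0..<n}"
    show "\<phi> (\<phi> l) = l" using l phiphi by auto
    show "\<phi> l \<in> {0..<n}" using phin by auto
  qed
  also have "\<dots> = (D * C) $$ (i,j)"
    by (rule mult_entry[symmetric]) (use Cc Dc i j in auto)
  finally show "(C * D) $$ (i,j) = (D * C) $$ (i,j)" .
qed (use assms in \<open>auto simp: circulant_def\<close>)

lemma circ_one: "circulant n (1\<^sub>m n)" by (simp add: circulant_def)
lemma circ_P: "circulant n (Pshift n)" by (simp add: circulant_def)
lemma circ_carrier: "circulant n C \<Longrightarrow> C \<in> carrier_mat n n" by (simp add: circulant_def)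

lemma circ_mult: assumes C: "circulant n C" and D: "circulant n D" shows "circulant n (C * D)"
proof -
  have Cc: "C \<in> carrier_mat n n" and Dc: "D \<in> carrier_mat n n" using C D by (auto simp: circulant_def)
  have "Pshift n * (C * D) = (Pshift n * C) * D" using Cc Dc by (simp add: assoc_mult_mat[of _ n n _ n _ n])
  also have "\<dots> = C * (Pshift n * D)" using C Cc Dc by (simp add: circulant_def assoc_mult_mat[of _ n n _ n _ n])
  also have "\<dots> = C * D * Pshift n" using D Cc Dc by (simp add: circulant_def assoc_mult_mat[of _ n n _ n _ n])
  finally show ?thesis using Cc Dc minus_carrier_mat[OF Dc] by (simp add: circulant_def)
qed

lemma circ_add: assumes C: "circulant n C" and D: "circulant n D" shows "circulant n (C + D)"
proof -
  have Cc: "C \<in> carrier_mat n n" and Dc: "D \<in> carrier_mat n n" using C D by (auto simp: circulant_def)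
  have "Pshift n * (C + D) = Pshift n * C + Pshift n * D" using Cc Dc by (simp add: mult_add_distrib_mat[of _ n n])
  also have "\<dots> = (C + D) * Pshift n" using C D Cc Dc by (simp add: circulant_def add_mult_distrib_mat[OF Cc Dc P_carrier])
  finally show ?thesis using Cc Dc minus_carrier_mat[OF Dc] by (simp add: circulant_def)
qed

lemma circ_minus: assumes C: "circulant n C" and D: "circulant n D" shows "circulant n (C - D)"
proof -
  have Cc: "C \<in> carrier_mat n n" and Dc: "D \<in> carrier_mat n n" using C D by (auto simp: circulant_def)
  have "Pshift n * (C - D) = Pshift n * C - Pshift n * D" using Cc Dc by (simp add: mult_minus_distrib_mat[of _ n n])
  also have "\<dots> = (C - D) * Pshift n" using C D Cc Dc by (simp add: circulant_def minus_mult_distrib_mat[OF Cc Dc P_carrier])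
  finally show ?thesis using Cc Dc minus_carrier_mat[OF Dc] by (simp add: circulant_def)

qed

lemma circ_smult: assumes C: "circulant n C" shows "circulant n (a \<cdot>\<^sub>m C)"
proof -
  have Cc: "C \<in> carrier_mat n n" using C by (auto simp: circulant_def)
  have "Pshift n * (a \<cdot>\<^sub>m C) = a \<cdot>\<^sub>m (Pshift n * C)" using Cc by (simp add: mult_smult_distrib[of _ n n])
  also have "\<dots> = (a \<cdot>\<^sub>m C) * Pshift n" using C Cc by (simp add: circulant_def mult_smult_assoc_mat[OF Cc P_carrier])
  finally show ?thesis using Cc by (simp add: circulant_def)
qed

lemma hankel_form: assumes K: "hankel n K" and i: "i < n" and j: "j < n"
  shows "K $$ (i,j) = K $$ (0, (i + j) mod n)"
  using i j
proof (induction i arbitrary: j)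
  case 0 thus ?case by simp
next
  case (Suc i)
  have Kc: "K \<in> carrier_mat n n" and e: "Pshift n * K = K * transpose_mat (Pshift n)"
    using K by (auto simp: hankel_def)
  have n: "n > 0" using Suc by auto
  have j': "Suc j mod n < n" using n by simp
  have "K $$ (Suc i, j) = K $$ (Suc i mod n, j)" using Suc by simp
  also have "\<dots> = K $$ (i, Suc j mod n)"
    using PY[OF Kc, of i j] YPt[OF Kc, of i j] e Suc by simp
  also have "\<dots> = K $$ (0, (i + Suc j mod n) mod n)" using Suc.IH[OF _ j'] Suc by simp
  also have "(i + Suc j mod n) mod n = (Suc i + j) mod n" by (simp add: mod_simps)
  finally show ?case .
qed

lemma hankel_sym: assumes K: "hankel n K" shows "transpose_mat K = K"
proof -
  have Kc: "K \<in> carrier_mat n n" using K by (auto simp: hankel_def)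
  show ?thesis
  proof (rule eq_matI)
    fix i j assume "i < dim_row K" "j < dim_col K"
    hence i: "i < n" and j: "j < n" using Kc by auto
    show "transpose_mat K $$ (i,j) = K $$ (i,j)"
      using hankel_form[OF K i j] hankel_form[OF K j i] i j Kc by (simp add: add.commute[of i j])
  qed (use Kc in auto)
qed

lemma Xmat_carrier[simp]: "Xmat n x \<in> carrier_mat n n" by (simp add: Xmat_def)

lemma Xmat_hankel: "hankel n (Xmat n x)"
proof -
  have "Pshift n * Xmat n x = Xmat n x * transpose_mat (Pshift n)"
  proof (rule eq_matI)
    fix i j assume "i < dim_row (Xmat n x * transpose_mat (Pshift n))" "j < dim_col (Xmat n x * transpose_mat (Pshift n))"
    hence i: "i < n" and j: "j < n" by (auto simp: Xmat_def)
    have n: "n > 0" using i by auto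
    show "(Pshift n * Xmat n x) $$ (i,j) = (Xmat n x * transpose_mat (Pshift n)) $$ (i,j)"
      using PY[of "Xmat n x" n i j] YPt[of "Xmat n x" n i j] i j n
      by (simp add: Xmat_def mod_simps)
  qed (auto simp: Xmat_def)
  thus ?thesis by (simp add: hankel_def)
qed

definition hb1 :: "nat \<Rightarrow> real mat \<Rightarrow> real mat" where "hb1 n H = mat n n (\<lambda>(i,j). H $$ (i,j))"
definition hb2 :: "nat \<Rightarrow> real mat \<Rightarrow> real mat" where "hb2 n H = mat n n (\<lambda>(i,j). H $$ (i,j+n))"
definition hb3 :: "nat \<Rightarrow> real mat \<Rightarrow> real mat" where "hb3 n H = mat n n (\<lambda>(i,j). H $$ (i+n,j))"
definition hb4 :: "nat \<Rightarrow> real mat \<Rightarrow> real mat" where "hb4 n H = mat n n (\<lambda>(i,j). H $$ (i+n,j+n))"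

lemma hb_carrier[simp]: "hb1 n H \<in> carrier_mat n n" "hb2 n H \<in> carrier_mat n n"
  "hb3 n H \<in> carrier_mat n n" "hb4 n H \<in> carrier_mat n n"
  by (simp_all add: hb1_def hb2_def hb3_def hb4_def)

lemma hb_dims[simp]: "dim_row (hb1 n H) = n" "dim_col (hb1 n H) = n" "dim_row (hb2 n H) = n" "dim_col (hb2 n H) = n"
  "dim_row (hb3 n H) = n" "dim_col (hb3 n H) = n" "dim_row (hb4 n H) = n" "dim_col (hb4 n H) = n"
  by (simp_all add: hb1_def hb2_def hb3_def hb4_def)

lemma H_split: assumes "H \<in> carrier_mat (2*n) (2*n)"
  shows "H = four_block_mat (hb1 n H) (hb2 n H) (hb3 n H) (hb4 n H)"
  by (rule eq_matI) (use assms in \<open>auto simp: hb1_def hb2_def hb3_def hb4_def\<close>)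

lemma four_block_eq: assumes eq: "four_block_mat A B C D = four_block_mat A' B' C' D'"
  and c: "A \<in> carrier_mat n1 m1" "B \<in> carrier_mat n1 m2" "C \<in> carrier_mat n2 m1" "D \<in> carrier_mat n2 m2"
  "A' \<in> carrier_mat n1 m1" "B' \<in> carrier_mat n1 m2" "C' \<in> carrier_mat n2 m1" "D' \<in> carrier_mat n2 m2"
  shows "A = A' \<and> B = B' \<and> C = C' \<and> D = D'"
proof -
  have e: "four_block_mat A B C D $$ (i,j) = four_block_mat A' B' C' D' $$ (i,j)" for i j using eq by simp
  have "A = A'" proof (rule eq_matI)
    fix i j assume "i < dim_row A'" "j < dim_col A'"
    thus "A $$ (i,j) = A' $$ (i,j)" using e[of i j] c by auto
  qed (use c in auto)
  moreover have "B = B'" proof (rule eq_matI)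
    fix i j assume "i < dim_row B'" "j < dim_col B'"
    thus "B $$ (i,j) = B' $$ (i,j)" using e[of i "j + m1"] c by auto
  qed (use c in auto)
  moreover have "C = C'" proof (rule eq_matI)
    fix i j assume "i < dim_row C'" "j < dim_col C'"
    thus "C $$ (i,j) = C' $$ (i,j)" using e[of "i + n1" j] c by auto
  qed (use c in auto)
  moreover have "D = D'" proof (rule eq_matI)
    fix i j assume "i < dim_row D'" "j < dim_col D'"
    thus "D $$ (i,j) = D' $$ (i,j)" using e[of "i + n1" "j + m1"] c by auto
  qed (use c in auto)
  ultimately show ?thesis by simp
qed

lemma Amat_def': "Amat n = four_block_mat (Pshift n) (0\<^sub>m n n) (0\<^sub>m n n) (Pshift n)" by (simp add: Amat_def)

lemma Pt_carrier: "transpose_mat (Pshift n) \<in> carrier_mat n n" by simp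

lemma admissible_blocks: assumes adm: "admissible_hessian n H"
  shows "hankel n (hb1 n H)" "hankel n (hb2 n H)" "hankel n (hb4 n H)" "hb3 n H = hb2 n H"
proof -
  have Hc: "H \<in> carrier_mat (2*n) (2*n)" and sym: "transpose_mat H = H"
    and e: "Amat n * H = H * transpose_mat (Amat n)" using adm by (auto simp: admissible_hessian_def)
  note sp = H_split[OF Hc]
  let ?K1 = "hb1 n H" and ?K2 = "hb2 n H" and ?K3 = "hb3 n H" and ?K4 = "hb4 n H"
  let ?P = "Pshift n" and ?Pt = "transpose_mat (Pshift n)"
  have At: "transpose_mat (Amat n) = four_block_mat ?Pt (0\<^sub>m n n) (0\<^sub>m n n) ?Pt"
    unfolding Amat_def by (subst transpose_four_block_mat[where ?nr1.0=n and ?nc1.0=n and ?nr2.0=n and ?nc2.0=n]) auto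
  have l: "Amat n * H = four_block_mat (?P * ?K1) (?P * ?K2) (?P * ?K3) (?P * ?K4)"
  proof -
    have "Amat n * H = Amat n * four_block_mat ?K1 ?K2 ?K3 ?K4" using sp by simp
    also have "\<dots> = four_block_mat (?P * ?K1) (?P * ?K2) (?P * ?K3) (?P * ?K4)"
      unfolding Amat_def by (subst mult_four_block_mat[where ?nr1.0=n and ?n1.0=n and ?n2.0=n and ?nr2.0=n and ?nc1.0=n and ?nc2.0=n])
         (auto simp: mult_carrier_mat[OF P_carrier hb_carrier(3)] mult_carrier_mat[OF P_carrier hb_carrier(4)])
    finally show ?thesis .
  qed
  have r: "H * transpose_mat (Amat n) = four_block_mat (?K1 * ?Pt) (?K2 * ?Pt) (?K3 * ?Pt) (?K4 * ?Pt)"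
  proof -
    have "H * transpose_mat (Amat n) = four_block_mat ?K1 ?K2 ?K3 ?K4 * transpose_mat (Amat n)" using sp by simp
    also have "\<dots> = four_block_mat (?K1 * ?Pt) (?K2 * ?Pt) (?K3 * ?Pt) (?K4 * ?Pt)"
      unfolding At by (subst mult_four_block_mat[where ?nr1.0=n and ?n1.0=n and ?n2.0=n and ?nr2.0=n and ?nc1.0=n and ?nc2.0=n])
         (auto simp: mult_carrier_mat[OF hb_carrier(1) Pt_carrier] mult_carrier_mat[OF hb_carrier(2) Pt_carrier]
           mult_carrier_mat[OF hb_carrier(3) Pt_carrier] mult_carrier_mat[OF hb_carrier(4) Pt_carrier])
    finally show ?thesis .
  qed
  have eqs: "?P * ?K1 = ?K1 * ?Pt \<and> ?P * ?K2 = ?K2 * ?Pt \<and> ?P * ?K3 = ?K3 * ?Pt \<and> ?P * ?K4 = ?K4 * ?Pt"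
    by (rule four_block_eq[of _ _ _ _ _ _ _ _ n n n n]) (use e l r in auto)
  thus h1: "hankel n ?K1" and h2: "hankel n ?K2" and "hankel n ?K4" by (auto simp: hankel_def)
  have "transpose_mat H = four_block_mat (transpose_mat ?K1) (transpose_mat ?K3) (transpose_mat ?K2) (transpose_mat ?K4)"
  proof -
    have "transpose_mat H = transpose_mat (four_block_mat ?K1 ?K2 ?K3 ?K4)" using sp by simp
    also have "\<dots> = four_block_mat (transpose_mat ?K1) (transpose_mat ?K3) (transpose_mat ?K2) (transpose_mat ?K4)"
      by (subst transpose_four_block_mat[where ?nr1.0=n and ?nc1.0=n and ?nr2.0=n and ?nc2.0=n]) auto
    finally show ?thesis .
  qed
  hence "four_block_mat (transpose_mat ?K1) (transpose_mat ?K3) (transpose_mat ?K2) (transpose_mat ?K4)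
     = four_block_mat ?K1 ?K2 ?K3 ?K4" using sym sp by simp
  hence "transpose_mat ?K2 = ?K3"
    by (rule four_block_eq[of _ _ _ _ _ _ _ _ n n n n, THEN conjunct2, THEN conjunct2, THEN conjunct1]) auto
  thus "?K3 = ?K2" using hankel_sym[OF h2] by simp
qed

definition Dm :: "nat \<Rightarrow> real mat \<Rightarrow> real vec \<Rightarrow> real mat" where
  "Dm n H x = (hb2 n H * Xmat n x) * (hb2 n H * Xmat n x) - (hb1 n H * Xmat n x) * (hb4 n H * Xmat n x)"

definition Cm :: "nat \<Rightarrow> real mat \<Rightarrow> real vec \<Rightarrow> real \<Rightarrow> real mat" where
  "Cm n H x eps = 1\<^sub>m n - (eps^2) \<cdot>\<^sub>m Dm n H x"

lemma Xmat_dims[simp]: "dim_row (Xmat n x) = n" "dim_col (Xmat n x) = n" by (simp_all add: Xmat_def)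

lemma Dm_carrier[simp]: "Dm n H x \<in> carrier_mat n n"
  unfolding Dm_def by (rule minus_carrier_mat) (auto simp: mult_carrier_mat[of _ n n])

lemma Dm_dims[simp]: "dim_row (Dm n H x) = n" "dim_col (Dm n H x) = n"
  using Dm_carrier[of n H x] unfolding carrier_mat_def by auto

lemma Cm_carrier[simp]: "Cm n H x eps \<in> carrier_mat n n"
  unfolding Cm_def by (rule minus_carrier_mat) auto

lemma HJ_form: assumes adm: "admissible_hessian n H"
  shows "H * Jmat n x = four_block_mat (- (hb2 n H * Xmat n x)) (hb1 n H * Xmat n x)
           (- (hb4 n H * Xmat n x)) (hb2 n H * Xmat n x)"
proof -
  have Hc: "H \<in> carrier_mat (2*n) (2*n)" using adm by (auto simp: admissible_hessian_def)
  note sp = H_split[OF Hc, unfolded admissible_blocks(4)[OF adm]]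
  let ?K1 = "hb1 n H" and ?K2 = "hb2 n H" and ?K4 = "hb4 n H" and ?X = "Xmat n x"
  have c: "?K1 * ?X \<in> carrier_mat n n" "?K2 * ?X \<in> carrier_mat n n" "?K4 * ?X \<in> carrier_mat n n"
    by (auto simp: mult_carrier_mat[of _ n n])
  have "H * Jmat n x = four_block_mat ?K1 ?K2 ?K2 ?K4 * four_block_mat (0\<^sub>m n n) ?X (- ?X) (0\<^sub>m n n)"
    using sp by (simp add: Jmat_def)
  also have "\<dots> = four_block_mat (?K1 * 0\<^sub>m n n + ?K2 * - ?X) (?K1 * ?X + ?K2 * 0\<^sub>m n n)
      (?K2 * 0\<^sub>m n n + ?K4 * - ?X) (?K2 * ?X + ?K4 * 0\<^sub>m n n)"
    by (rule mult_four_block_mat) auto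
  also have "\<dots> = four_block_mat (- (?K2 * ?X)) (?K1 * ?X) (- (?K4 * ?X)) (?K2 * ?X)"
    using c by (intro cong_four_block_mat) (auto simp: uminus_carrier_mat)
  finally show ?thesis .
qed

lemma Mmat_block: assumes adm: "admissible_hessian n H"
  shows "Mmat n H x eps = four_block_mat (Cm n H x eps) (0\<^sub>m n n) (0\<^sub>m n n) (Cm n H x eps)"
proof -
  let ?K1 = "hb1 n H" and ?K2 = "hb2 n H" and ?K4 = "hb4 n H" and ?X = "Xmat n x"
  let ?a = "?K2 * ?X" and ?b = "?K1 * ?X" and ?c = "?K4 * ?X"
  have ca: "circulant n ?a" and cb: "circulant n ?b" and cc: "circulant n ?c"
    using hankel_mult admissible_blocks[OF adm] Xmat_hankel by auto
  have c: "?a \<in> carrier_mat n n" "?b \<in> carrier_mat n n" "?c \<in> carrier_mat n n"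
    by (auto simp: mult_carrier_mat[of _ n n])
  have cab: "?b * ?a = ?a * ?b" and cac: "?c * ?a = ?a * ?c" and cbc: "?c * ?b = ?b * ?c"
    using circ_comm ca cb cc by blast+
  have "H * Jmat n x * (H * Jmat n x) = four_block_mat (- ?a) ?b (- ?c) ?a * four_block_mat (- ?a) ?b (- ?c) ?a"
    by (simp add: HJ_form[OF adm])
  also have "\<dots> = four_block_mat (- ?a * - ?a + ?b * - ?c) (- ?a * ?b + ?b * ?a)
      (- ?c * - ?a + ?a * - ?c) (- ?c * ?b + ?a * ?a)"
    by (rule mult_four_block_mat) (use c in \<open>auto simp: uminus_carrier_mat\<close>)
  also have "\<dots> = four_block_mat (Dm n H x) (0\<^sub>m n n) (0\<^sub>m n n) (Dm n H x)"
    unfolding Dm_def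
  proof (intro cong_four_block_mat)
    show "- ?a * - ?a + ?b * - ?c = ?a * ?a - ?b * ?c"
      by (rule eq_matI) (use c in auto)
    show "- ?a * ?b + ?b * ?a = 0\<^sub>m n n" unfolding cab by (rule eq_matI) (use c in auto)
    show "- ?c * - ?a + ?a * - ?c = 0\<^sub>m n n"
      proof -
      have "- ?c * - ?a = ?c * ?a" by (rule eq_matI) (use c in auto)
      thus ?thesis unfolding cac by (intro eq_matI) (use c in auto)
    qed
    show "- ?c * ?b + ?a * ?a = ?a * ?a - ?b * ?c"
    proof -
      have e: "- ?c * ?b = - (?b * ?c)" unfolding cbc[symmetric] by (rule eq_matI) (use c in auto)
      show ?thesis unfolding e by (intro eq_matI) (use c in auto)
    qed
  qed
  finally have sq: "H * Jmat n x * (H * Jmat n x) = four_block_mat (Dm n H x) (0\<^sub>m n n) (0\<^sub>m n n) (Dm n H x)" .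
  show ?thesis unfolding Mmat_def sq Cm_def
    by (rule eq_matI) auto
qed

definition Einv :: "nat \<Rightarrow> real mat \<Rightarrow> real vec \<Rightarrow> real \<Rightarrow> real mat" where
  "Einv n H x eps = (1 / det (Cm n H x eps)) \<cdot>\<^sub>m adj_mat (Cm n H x eps)"

lemma Einv_carrier[simp]: "Einv n H x eps \<in> carrier_mat n n"
  unfolding Einv_def using adj_mat(1)[OF Cm_carrier] by simp

lemma Einv_inv: assumes "det (Cm n H x eps) \<noteq> 0"
  shows "Einv n H x eps * Cm n H x eps = 1\<^sub>m n" "Cm n H x eps * Einv n H x eps = 1\<^sub>m n"
proof -
  have A: "adj_mat (Cm n H x eps) \<in> carrier_mat n n" using adj_mat(1)[OF Cm_carrier] .
  have sm: "(1 / det (Cm n H x eps)) \<cdot>\<^sub>m (det (Cm n H x eps) \<cdot>\<^sub>m 1\<^sub>m n) = (1\<^sub>m n :: real mat)"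
    by (rule eq_matI) (use assms in auto)
  show "Einv n H x eps * Cm n H x eps = 1\<^sub>m n" unfolding Einv_def
    using assms adj_mat(3)[OF Cm_carrier, of n H x eps] by (simp add: mult_smult_assoc_mat[OF A Cm_carrier] sm)
  show "Cm n H x eps * Einv n H x eps = 1\<^sub>m n" unfolding Einv_def
    using assms adj_mat(2)[OF Cm_carrier, of n H x eps] by (simp add: mult_smult_distrib[OF Cm_carrier A] sm)
qed

lemma Amat_carrier[simp]: "Amat n \<in> carrier_mat (2*n) (2*n)"
  unfolding Amat_def carrier_mat_def by simp

lemma Cm_dims[simp]: "dim_row (Cm n H x eps) = n" "dim_col (Cm n H x eps) = n"
  using Cm_carrier[of n H x eps] unfolding carrier_mat_def by auto

lemma Mmat_carrier: "admissible_hessian n H \<Longrightarrow> Mmat n H x eps \<in> carrier_mat (2*n) (2*n)"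
  unfolding carrier_mat_def by (simp add: Mmat_block)

lemma det_Cm_nz: assumes adm: "admissible_hessian n H" and inv: "invertible_mat (Mmat n H x eps)"
  shows "det (Cm n H x eps) \<noteq> 0"
proof -
  let ?M = "Mmat n H x eps"
  note Mc = Mmat_carrier[OF adm, of x eps]
  from inv Mc obtain B where MB: "?M * B = 1\<^sub>m (2*n)" and BM: "B * ?M = 1\<^sub>m (dim_row B)"
    unfolding invertible_mat_def inverts_mat_def by auto
  have "dim_col B = 2*n" using arg_cong[OF MB, of dim_col] by simp
  moreover have "dim_row B = 2*n" using arg_cong[OF BM, of dim_col] Mc by simp
  ultimately have Bc: "B \<in> carrier_mat (2*n) (2*n)" by auto
  have "det ?M * det B = 1" using det_mult[OF Mc Bc] MB by simp
  hence "det ?M \<noteq> 0" by auto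
  moreover have "det ?M = det (Cm n H x eps) * det (Cm n H x eps)"
    unfolding Mmat_block[OF adm] by (rule det_four_block_mat_lower_left_zero) auto
  ultimately show ?thesis by auto
qed

lemma circ_Dm: assumes adm: "admissible_hessian n H" shows "circulant n (Dm n H x)"
proof -
  have h: "hankel n (hb1 n H)" "hankel n (hb2 n H)" "hankel n (hb4 n H)" "hankel n (Xmat n x)"
    using admissible_blocks[OF adm] Xmat_hankel by auto
  show ?thesis unfolding Dm_def
    by (intro circ_minus circ_mult hankel_mult h)
qed

lemma circ_Cm: assumes adm: "admissible_hessian n H" shows "circulant n (Cm n H x eps)"
  unfolding Cm_def by (intro circ_minus circ_one circ_smult circ_Dm adm)

lemma circ_inv: assumes C: "circulant n C" and E: "E \<in> carrier_mat n n"
  and EC: "E * C = 1\<^sub>m n" and CE: "C * E = 1\<^sub>m n"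
  shows "circulant n E"
proof -
  have Cc: "C \<in> carrier_mat n n" and e: "Pshift n * C = C * Pshift n" using C by (auto simp: circulant_def)
  note P = P_carrier[of n]
  have "E * Pshift n = E * (Pshift n * (C * E))" using E CE by simp
  also have "\<dots> = E * (Pshift n * C) * E" using E Cc P by (simp add: assoc_mult_mat[of _ n n _ n _ n] mult_carrier_mat[of _ n n _ n])
  also have "\<dots> = (E * C) * Pshift n * E" unfolding e using E Cc P
    by (simp add: assoc_mult_mat[of _ n n _ n _ n] mult_carrier_mat[of _ n n _ n])
  also have "\<dots> = Pshift n * E" using EC E P by simp
  finally show ?thesis using E by (simp add: circulant_def)
qed

lemma circ_Einv: assumes adm: "admissible_hessian n H" and d: "det (Cm n H x eps) \<noteq> 0"
  shows "circulant n (Einv n H x eps)"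
  using circ_inv[OF circ_Cm[OF adm] Einv_carrier Einv_inv[OF d]] .

lemma P_pow_entry: assumes a: "a < n" and b: "b < n"
  shows "(Pshift n ^\<^sub>m i) $$ (a,b) = (if b = (a + i) mod n then 1 else 0)"
  using b
proof (induction i arbitrary: b)
  case 0 thus ?case using a by simp
next
  case (Suc i)
  have n: "n > 0" using a by auto
  define l where "l = nat ((int b - 1) mod int n)"
  have l: "l < n" using n by (simp add: l_def nat_less_iff)
  have "(Pshift n ^\<^sub>m Suc i) $$ (a,b) = (Pshift n ^\<^sub>m i * Pshift n) $$ (a,b)" by simp
  also have "\<dots> = (Pshift n ^\<^sub>m i) $$ (a, l)" unfolding l_def
    by (rule YP) (use a Suc in auto)
  also have "\<dots> = (if l = (a + i) mod n then 1 else 0)" using Suc.IH[OF l] .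
  also have "(l = (a + i) mod n) = (b = Suc ((a + i) mod n) mod n)"
    using mod_pred_iff[of "(a+i) mod n" n b] n Suc l_def by auto
  also have "Suc ((a + i) mod n) mod n = (a + Suc i) mod n" by (simp add: mod_Suc_eq)
  finally show ?case .
qed

lemma mod_diff_iff: fixes n a b i :: nat assumes "a < n" "b < n" "i < n"
  shows "(b = (a + i) mod n) = (i = nat ((int b - int a) mod int n))"
proof -
  have n: "n > 0" using assms by auto
  have "(b = (a + i) mod n) = (int b = (int a + int i) mod int n)"
    by (metis of_nat_add of_nat_eq_iff of_nat_mod)
  also have "\<dots> = (int i = (int b - int a) mod int n)"
  proof
    assume h: "int b = (int a + int i) mod int n"
    have "(int b - int a) mod int n = ((int a + int i) mod int n - int a) mod int n" by (simp add: h)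
    also have "\<dots> = int i" using assms by (simp add: mod_simps)
    finally show "int i = (int b - int a) mod int n" by simp
  next
    assume h: "int i = (int b - int a) mod int n"
    have "(int a + int i) mod int n = (int a + (int b - int a) mod int n) mod int n" by (simp add: h)
    also have "\<dots> = int b" using assms by (simp add: mod_simps)
    finally show "int b = (int a + int i) mod int n" by simp
  qed
  also have "\<dots> = (i = nat ((int b - int a) mod int n))" using n by auto
  finally show ?thesis .
qed

definition Wc :: "nat \<Rightarrow> (nat \<Rightarrow> real) \<Rightarrow> real mat" where
  "Wc n c = mat n n (\<lambda>(a,b). c (nat ((int b - int a) mod int n)))"

lemma Amat_pow: "Amat n ^\<^sub>m i = four_block_mat (Pshift n ^\<^sub>m i) (0\<^sub>m n n) (0\<^sub>m n n) (Pshift n ^\<^sub>m i)"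
  unfolding Amat_def by (rule pow_four_block_mat) auto

lemma pow_comb_Wc: "pow_comb c (Amat n) n = four_block_mat (Wc n c) (0\<^sub>m n n) (0\<^sub>m n n) (Wc n c)"
proof (rule eq_matI)
  have dA: "dim_row (Amat n) = 2*n" "dim_col (Amat n) = 2*n" using Amat_carrier[of n] unfolding carrier_mat_def by auto
  fix i j assume "i < dim_row (four_block_mat (Wc n c) (0\<^sub>m n n) (0\<^sub>m n n) (Wc n c))"
    "j < dim_col (four_block_mat (Wc n c) (0\<^sub>m n n) (0\<^sub>m n n) (Wc n c))"
  hence i: "i < 2*n" and j: "j < 2*n" by (auto simp: Wc_def)
  have "pow_comb c (Amat n) n $$ (i,j) = (\<Sum>l<n. c l * (Amat n ^\<^sub>m l) $$ (i,j))"
    unfolding pow_comb_def using i j dA by simp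
  also have "\<dots> = four_block_mat (Wc n c) (0\<^sub>m n n) (0\<^sub>m n n) (Wc n c) $$ (i,j)"
  proof (cases "i < n \<and> j < n \<or> \<not> i < n \<and> \<not> j < n")
    case True
    define a where "a = (if i < n then i else i - n)"
    define b where "b = (if j < n then j else j - n)"
    have a: "a < n" and b: "b < n" using i j by (auto simp: a_def b_def)
    have "(\<Sum>l<n. c l * (Amat n ^\<^sub>m l) $$ (i,j)) = (\<Sum>l<n. c l * (Pshift n ^\<^sub>m l) $$ (a,b))"
      using True i j by (intro sum.cong) (auto simp: Amat_pow a_def b_def)
    also have "\<dots> = (\<Sum>l<n. if l = nat ((int b - int a) mod int n) then c l else 0)"
      by (intro sum.cong) (auto simp: P_pow_entry[OF a b] mod_diff_iff[OF a b])
    also have "\<dots> = c (nat ((int b - int a) mod int n))"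
      using a by (simp add: nat_less_iff)
    also have "\<dots> = four_block_mat (Wc n c) (0\<^sub>m n n) (0\<^sub>m n n) (Wc n c) $$ (i,j)"
      using True i j by (auto simp: Wc_def a_def b_def)
    finally show ?thesis .
  next
    case False
    have "(\<Sum>l<n. c l * (Amat n ^\<^sub>m l) $$ (i,j)) = (\<Sum>l<n. 0)"
      using False i j by (intro sum.cong) (auto simp: Amat_pow)
    thus ?thesis using False i j by (auto simp: Wc_def)
  qed
  finally show "pow_comb c (Amat n) n $$ (i,j) = four_block_mat (Wc n c) (0\<^sub>m n n) (0\<^sub>m n n) (Wc n c) $$ (i,j)" .
qed (auto simp: pow_comb_def Wc_def Amat_def)

lemma Wc_circ: assumes C: "circulant n C" shows "Wc n (\<lambda>l. C $$ (0,l)) = C"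
proof -
  have Cc: "C \<in> carrier_mat n n" using C by (auto simp: circulant_def)
  show ?thesis by (rule eq_matI) (use Cc circ_form[OF C] in \<open>auto simp: Wc_def\<close>)
qed

lemma Wc_entry0: "i < n \<Longrightarrow> Wc n c $$ (0,i) = c i"
  by (simp add: Wc_def)

lemma det_tendsto:
  assumes F: "\<And>t. F t \<in> carrier_mat m m" and F0: "F0 \<in> carrier_mat m m"
    and lim: "\<And>a b. a < m \<Longrightarrow> b < m \<Longrightarrow> ((\<lambda>t. F t $$ (a,b)) \<longlongrightarrow> F0 $$ (a,b)) L"
  shows "((\<lambda>t. det (F t) :: real) \<longlongrightarrow> det F0) L"
proof -
  have e: "(\<lambda>t. det (F t)) = (\<lambda>t. \<Sum>p\<in>{p. p permutes {0..<m}}. signof p * (\<Prod>i = 0..<m. F t $$ (i, p i)))"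
    using det_def'[OF F] by auto
  show ?thesis unfolding e det_def'[OF F0]
  proof (intro tendsto_intros)
    fix p i assume p: "p \<in> {p. p permutes {0..<m}}" and i: "i \<in> {0..<m}"
    have "p i < m" using p i permutes_in_image[of p "{0..<m}" i] by auto
    thus "((\<lambda>t. F t $$ (i, p i)) \<longlongrightarrow> F0 $$ (i, p i)) L" using i by (intro lim) auto
  qed
qed

lemma adj_tendsto:
  assumes F: "\<And>t. F t \<in> carrier_mat m m" and F0: "F0 \<in> carrier_mat m m"
    and lim: "\<And>a b. a < m \<Longrightarrow> b < m \<Longrightarrow> ((\<lambda>t. F t $$ (a,b)) \<longlongrightarrow> F0 $$ (a,b)) L"
    and a: "a < m" and b: "b < m"
  shows "((\<lambda>t. adj_mat (F t) $$ (a,b) :: real) \<longlongrightarrow> adj_mat F0 $$ (a,b)) L"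
proof -
  have e: "adj_mat G $$ (a,b) = (-1)^(b+a) * det (mat_delete G b a)" if "G \<in> carrier_mat m m" for G :: "real mat"
    using that a b by (simp add: adj_mat_def cofactor_def)
  have "((\<lambda>t. det (mat_delete (F t) b a)) \<longlongrightarrow> det (mat_delete F0 b a)) L"
  proof (rule det_tendsto[of _ "m - 1"])
    show "mat_delete (F t) b a \<in> carrier_mat (m - 1) (m - 1)" for t using mat_delete_carrier[OF F] .
    show "mat_delete F0 b a \<in> carrier_mat (m - 1) (m - 1)" using mat_delete_carrier[OF F0] .
    fix a' b' assume a': "a' < m - 1" and b': "b' < m - 1"
    define ia where "ia = (if a' < b then a' else Suc a')"
    define ib where "ib = (if b' < a then b' else Suc b')"
    have ia: "ia < m" and ib: "ib < m" using a' b' by (auto simp: ia_def ib_def)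
    have md: "mat_delete G b a $$ (a', b') = G $$ (ia, ib)" if "G \<in> carrier_mat m m" for G :: "real mat"
      using that a' b' by (auto simp: mat_delete_def ia_def ib_def)
    show "((\<lambda>t. mat_delete (F t) b a $$ (a', b')) \<longlongrightarrow> mat_delete F0 b a $$ (a', b')) L"
      unfolding md[OF F] md[OF F0] by (rule lim[OF ia ib])
  qed
  thus ?thesis unfolding e[OF F] e[OF F0] by (intro tendsto_intros)
qed

lemma bilin: assumes U: "U \<in> carrier_mat n n" and V: "V \<in> carrier_mat n n"
  and W: "W \<in> carrier_mat n n" and Z: "Z \<in> carrier_mat n n"
  shows "(U + t \<cdot>\<^sub>m V) * (W + t \<cdot>\<^sub>m Z) = U * W + t \<cdot>\<^sub>m (V * W + U * Z) + (t * t) \<cdot>\<^sub>m (V * Z :: real mat)"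
proof (rule eq_matI)
  fix i j assume "i < dim_row (U * W + t \<cdot>\<^sub>m (V * W + U * Z) + (t * t) \<cdot>\<^sub>m (V * Z))"
    "j < dim_col (U * W + t \<cdot>\<^sub>m (V * W + U * Z) + (t * t) \<cdot>\<^sub>m (V * Z))"
  hence i: "i < n" and j: "j < n" using V Z by auto
  have UV: "U + t \<cdot>\<^sub>m V \<in> carrier_mat n n" and WZ: "W + t \<cdot>\<^sub>m Z \<in> carrier_mat n n" using U V W Z by auto
  have "((U + t \<cdot>\<^sub>m V) * (W + t \<cdot>\<^sub>m Z)) $$ (i,j) = (\<Sum>l\<in>{0..<n}. (U + t \<cdot>\<^sub>m V) $$ (i,l) * (W + t \<cdot>\<^sub>m Z) $$ (l,j))"
    by (rule mult_entry[OF UV WZ i j])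
  also have "\<dots> = (\<Sum>l\<in>{0..<n}. U $$ (i,l) * W $$ (l,j) + t * (V $$ (i,l) * W $$ (l,j) + U $$ (i,l) * Z $$ (l,j)) + (t * t) * (V $$ (i,l) * Z $$ (l,j)))"
  proof (rule sum.cong)
    fix l assume "l \<in> {0..<n}"
    hence l: "l < n" by auto
    have "(U + t \<cdot>\<^sub>m V) $$ (i,l) = U $$ (i,l) + t * V $$ (i,l)" using U V i l by simp
    moreover have "(W + t \<cdot>\<^sub>m Z) $$ (l,j) = W $$ (l,j) + t * Z $$ (l,j)" using W Z j l by simp
    ultimately show "(U + t \<cdot>\<^sub>m V) $$ (i,l) * (W + t \<cdot>\<^sub>m Z) $$ (l,j) = U $$ (i,l) * W $$ (l,j) + t * (V $$ (i,l) * W $$ (l,j) + U $$ (i,l) * Z $$ (l,j)) + (t * t) * (V $$ (i,l) * Z $$ (l,j))"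
      by (simp add: algebra_simps)
  qed simp
  also have "\<dots> = (U * W) $$ (i,j) + t * ((V * W) $$ (i,j) + (U * Z) $$ (i,j)) + (t * t) * (V * Z) $$ (i,j)"
    unfolding mult_entry[OF U W i j] mult_entry[OF V W i j] mult_entry[OF U Z i j] mult_entry[OF V Z i j]
    by (simp add: sum.distrib sum_distrib_left[symmetric] distrib_left)
  also have "\<dots> = (U * W + t \<cdot>\<^sub>m (V * W + U * Z) + (t * t) \<cdot>\<^sub>m (V * Z)) $$ (i,j)"
    using i j U V W Z by simp
  finally show "((U + t \<cdot>\<^sub>m V) * (W + t \<cdot>\<^sub>m Z)) $$ (i,j) = (U * W + t \<cdot>\<^sub>m (V * W + U * Z) + (t * t) \<cdot>\<^sub>m (V * Z)) $$ (i,j)" .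
qed (use U V W Z in auto)

lemma Xmat_lin: assumes x: "x \<in> carrier_vec (2*n)" and k: "k < 2*n"
  shows "Xmat n (x + t \<cdot>\<^sub>v unit_vec (2*n) k) = Xmat n x + t \<cdot>\<^sub>m Xmat n (unit_vec (2*n) k)"
proof (rule eq_matI)
  fix i j assume "i < dim_row (Xmat n x + t \<cdot>\<^sub>m Xmat n (unit_vec (2*n) k))"
     "j < dim_col (Xmat n x + t \<cdot>\<^sub>m Xmat n (unit_vec (2*n) k))"
  hence i: "i < n" and j: "j < n" by auto
  have m: "(i + j) mod n < n" using i by auto
  hence "(i + j) mod n < 2 * n" by auto
  thus "Xmat n (x + t \<cdot>\<^sub>v unit_vec (2*n) k) $$ (i,j) = (Xmat n x + t \<cdot>\<^sub>m Xmat n (unit_vec (2*n) k)) $$ (i,j)"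
    using i j x by (simp add: Xmat_def)
qed auto

lemma Xmat_const: assumes x: "x \<in> carrier_vec (2*n)" and k: "k < 2*n" and kn: "\<not> k < n"
  shows "Xmat n (x + t \<cdot>\<^sub>v unit_vec (2*n) k) = Xmat n x"
proof (rule eq_matI)
  fix i j assume "i < dim_row (Xmat n x)" "j < dim_col (Xmat n x)"
  hence i: "i < n" and j: "j < n" by auto
  have m: "(i + j) mod n < n" using i by auto
  hence "(i + j) mod n < 2 * n" by auto
  hence "(x + t \<cdot>\<^sub>v unit_vec (2*n) k) $ ((i + j) mod n) = x $ ((i + j) mod n) + t * unit_vec (2*n) k $ ((i + j) mod n)"
    by simp
  also have "unit_vec (2*n) k $ ((i + j) mod n) = 0"
  proof -
    have "(i + j) mod n \<noteq> k" using m kn by auto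
    thus ?thesis using \<open>(i + j) mod n < 2 * n\<close> by (simp add: unit_vec_def)
  qed
  finally show "Xmat n (x + t \<cdot>\<^sub>v unit_vec (2*n) k) $$ (i,j) = Xmat n x $$ (i,j)"
    using i j by (simp add: Xmat_def)
qed auto

definition Sx :: "nat \<Rightarrow> nat \<Rightarrow> real mat" where "Sx n k = Xmat n (unit_vec (2*n) k)"

definition G1 :: "nat \<Rightarrow> real mat \<Rightarrow> real vec \<Rightarrow> nat \<Rightarrow> real mat" where
  "G1 n H x k = ((hb2 n H * Sx n k) * (hb2 n H * Xmat n x) + (hb2 n H * Xmat n x) * (hb2 n H * Sx n k))
     - ((hb1 n H * Sx n k) * (hb4 n H * Xmat n x) + (hb1 n H * Xmat n x) * (hb4 n H * Sx n k))"

definition G2 :: "nat \<Rightarrow> real mat \<Rightarrow> nat \<Rightarrow> real mat" where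
  "G2 n H k = (hb2 n H * Sx n k) * (hb2 n H * Sx n k) - (hb1 n H * Sx n k) * (hb4 n H * Sx n k)"

lemma Sx_carrier[simp]: "Sx n k \<in> carrier_mat n n" by (simp add: Sx_def)

lemma G1_carrier[simp]: "G1 n H x k \<in> carrier_mat n n"
  unfolding G1_def by (intro minus_carrier_mat add_carrier_mat mult_carrier_mat[of _ n n _ n]) auto

lemma G2_carrier[simp]: "G2 n H k \<in> carrier_mat n n"
  unfolding G2_def by (intro minus_carrier_mat add_carrier_mat mult_carrier_mat[of _ n n _ n]) auto

lemma G_dims[simp]: "dim_row (G1 n H x k) = n" "dim_col (G1 n H x k) = n" "dim_row (G2 n H k) = n" "dim_col (G2 n H k) = n"
  using G1_carrier[of n H x k] G2_carrier[of n H k] unfolding carrier_mat_def by auto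

lemma KX_lin: assumes K: "K \<in> carrier_mat n n" and x: "x \<in> carrier_vec (2*n)" and k: "k < 2*n"
  shows "K * Xmat n (x + t \<cdot>\<^sub>v unit_vec (2*n) k) = K * Xmat n x + t \<cdot>\<^sub>m (K * Sx n k)"
  unfolding Xmat_lin[OF x k] Sx_def
  by (subst mult_add_distrib_mat[OF K]) (auto simp: mult_smult_distrib[OF K Xmat_carrier])

lemma Dm_exp: assumes x: "x \<in> carrier_vec (2*n)" and k: "k < 2*n"
  shows "Dm n H (x + t \<cdot>\<^sub>v unit_vec (2*n) k) = Dm n H x + t \<cdot>\<^sub>m G1 n H x k + (t * t) \<cdot>\<^sub>m G2 n H k"
proof -
  let ?X = "Xmat n x" and ?S = "Sx n k"
  let ?a = "hb2 n H * ?X" and ?b = "hb1 n H * ?X" and ?c = "hb4 n H * ?X"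
  let ?al = "hb2 n H * ?S" and ?be = "hb1 n H * ?S" and ?ga = "hb4 n H * ?S"
  have c: "?a \<in> carrier_mat n n" "?b \<in> carrier_mat n n" "?c \<in> carrier_mat n n"
    "?al \<in> carrier_mat n n" "?be \<in> carrier_mat n n" "?ga \<in> carrier_mat n n"
    by (auto simp: mult_carrier_mat[of _ n n])
  have "Dm n H (x + t \<cdot>\<^sub>v unit_vec (2*n) k) = (?a + t \<cdot>\<^sub>m ?al) * (?a + t \<cdot>\<^sub>m ?al) - (?b + t \<cdot>\<^sub>m ?be) * (?c + t \<cdot>\<^sub>m ?ga)"
    unfolding Dm_def KX_lin[OF hb_carrier(1) x k] KX_lin[OF hb_carrier(2) x k] KX_lin[OF hb_carrier(4) x k] ..
  also have "\<dots> = (?a * ?a + t \<cdot>\<^sub>m (?al * ?a + ?a * ?al) + (t * t) \<cdot>\<^sub>m (?al * ?al))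
      - (?b * ?c + t \<cdot>\<^sub>m (?be * ?c + ?b * ?ga) + (t * t) \<cdot>\<^sub>m (?be * ?ga))"
    by (simp only: bilin[OF c(1) c(4) c(1) c(4)] bilin[OF c(2) c(5) c(3) c(6)])
  also have "\<dots> = Dm n H x + t \<cdot>\<^sub>m G1 n H x k + (t * t) \<cdot>\<^sub>m G2 n H k"
    unfolding Dm_def G1_def G2_def
    by (rule eq_matI) (use c in \<open>auto simp: algebra_simps\<close>)
  finally show ?thesis .
qed

lemma Cm_exp_entry: assumes x: "x \<in> carrier_vec (2*n)" and k: "k < 2*n" and a: "a < n" and b: "b < n"
  shows "Cm n H (x + t \<cdot>\<^sub>v unit_vec (2*n) k) eps $$ (a,b) =
     1\<^sub>m n $$ (a,b) - eps^2 * (Dm n H x $$ (a,b) + t * G1 n H x k $$ (a,b) + (t * t) * G2 n H k $$ (a,b))"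
  unfolding Cm_def Dm_exp[OF x k] using a b by simp

lemma vec_zero_step: "x \<in> carrier_vec m \<Longrightarrow> x + 0 \<cdot>\<^sub>v unit_vec m k = (x :: real vec)"
  by (rule eq_vecI) auto

lemma resolvent: assumes C0: "C0 \<in> carrier_mat n n" and C1: "C1 \<in> carrier_mat n n"
  and E0: "E0 \<in> carrier_mat n n" and E1: "E1 \<in> carrier_mat n n"
  and E1C1: "E1 * C1 = 1\<^sub>m n" and C0E0: "C0 * E0 = 1\<^sub>m n"
  shows "E1 - E0 = E1 * (C0 - C1) * (E0 :: real mat)"
proof -
  have "E1 * (C0 - C1) * E0 = (E1 * C0 - E1 * C1) * E0" using E1 C0 C1 by (simp add: mult_minus_distrib_mat[OF E1 C0 C1])
  also have "\<dots> = E1 * C0 * E0 - E1 * C1 * E0"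
    by (rule minus_mult_distrib_mat[of _ n n]) (use E1 C0 C1 E0 in auto)
  also have "E1 * C0 * E0 = E1 * (C0 * E0)" using E1 C0 E0 by (simp add: assoc_mult_mat[of _ n n _ n _ n])
  also have "\<dots> = E1" using C0E0 E1 by simp
  also have "E1 * C1 * E0 = E0" using E1C1 E0 by simp
  finally show ?thesis by simp
qed

lemma adj_carrier_n: "adj_mat (Cm n H x eps) \<in> carrier_mat n n" using adj_mat(1)[OF Cm_carrier] .

lemma Einv_entry: "a < n \<Longrightarrow> b < n \<Longrightarrow>
  Einv n H x eps $$ (a,b) = (1 / det (Cm n H x eps)) * adj_mat (Cm n H x eps) $$ (a,b)"
  unfolding Einv_def using adj_carrier_n[of n H x eps] by simp

lemma deriv_Einv:
  assumes x: "x \<in> carrier_vec (2*n)" and k: "k < n" and i: "i < n" and d0: "det (Cm n H x eps) \<noteq> 0"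
  shows "((\<lambda>t. Einv n H (x + t \<cdot>\<^sub>v unit_vec (2*n) k) eps $$ (0,i)) has_real_derivative
        (Einv n H x eps * (eps^2 \<cdot>\<^sub>m G1 n H x k) * Einv n H x eps) $$ (0,i)) (at 0)"
proof -
  have k2: "k < 2*n" using k by auto
  have n: "0 < n" using i by auto
  define Ct where "Ct t = Cm n H (x + t \<cdot>\<^sub>v unit_vec (2*n) k) eps" for t
  define Et where "Et t = Einv n H (x + t \<cdot>\<^sub>v unit_vec (2*n) k) eps" for t
  define C0 where "C0 = Cm n H x eps"
  define E0 where "E0 = Einv n H x eps"
  define G where "G = G1 n H x k"
  define G' where "G' = G2 n H k"
  have Gc: "G \<in> carrier_mat n n" "G' \<in> carrier_mat n n" by (simp_all add: G_def G'_def)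
  have Gd: "dim_row G = n" "dim_col G = n" "dim_row G' = n" "dim_col G' = n" by (simp_all add: G_def G'_def)
  have Ctc: "Ct t \<in> carrier_mat n n" for t by (simp add: Ct_def)
  have Etc: "Et t \<in> carrier_mat n n" for t by (simp add: Et_def)
  have C0c: "C0 \<in> carrier_mat n n" and E0c: "E0 \<in> carrier_mat n n" by (simp_all add: C0_def E0_def)
  have Ctent: "Ct t $$ (a,b) = 1\<^sub>m n $$ (a,b) - eps^2 * (Dm n H x $$ (a,b) + t * G $$ (a,b) + (t * t) * G' $$ (a,b))"
    if "a < n" "b < n" for t a b unfolding Ct_def G_def G'_def by (rule Cm_exp_entry[OF x k2 that])
  have Ct0: "Ct 0 = C0" unfolding Ct_def C0_def vec_zero_step[OF x] ..
  have entlim: "((\<lambda>t. Ct t $$ (a,b)) \<longlongrightarrow> C0 $$ (a,b)) (at 0)" if ab: "a < n" "b < n" for a b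
  proof -
    have "((\<lambda>t. 1\<^sub>m n $$ (a,b) - eps^2 * (Dm n H x $$ (a,b) + t * G $$ (a,b) + (t * t) * G' $$ (a,b)))
       \<longlongrightarrow> 1\<^sub>m n $$ (a,b) - eps^2 * (Dm n H x $$ (a,b) + 0 * G $$ (a,b) + (0 * 0) * G' $$ (a,b))) (at 0)"
      by (intro tendsto_intros)
    also have "1\<^sub>m n $$ (a,b) - eps^2 * (Dm n H x $$ (a,b) + 0 * G $$ (a,b) + (0 * 0) * G' $$ (a,b)) = C0 $$ (a,b)"
      using Ctent[OF ab, of 0] Ct0 by simp
    finally show ?thesis unfolding Ctent[OF ab] .
  qed
  have detlim: "((\<lambda>t. det (Ct t)) \<longlongrightarrow> det C0) (at 0)"
    by (rule det_tendsto[OF Ctc C0c entlim])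
  have adjlim: "((\<lambda>t. adj_mat (Ct t) $$ (0,a)) \<longlongrightarrow> adj_mat C0 $$ (0,a)) (at 0)" if "a \<in> {0..<n}" for a
    by (rule adj_tendsto[OF Ctc C0c entlim]) (use that n in auto)
  have dC0: "det C0 \<noteq> 0" using d0 by (simp add: C0_def)
  have ev: "eventually (\<lambda>t. det (Ct t) \<noteq> 0 \<and> t \<noteq> 0) (at (0::real))"
  proof -
    have e1: "eventually (\<lambda>t. det (Ct t) \<noteq> 0) (at (0::real))" by (rule tendsto_imp_eventually_ne[OF detlim dC0])
    have e2: "eventually (\<lambda>t. t \<noteq> 0) (at (0::real))" by (simp add: eventually_at_filter)
    show ?thesis by (rule eventually_conj[OF e1 e2])
  qed
  define Wt where "Wt t = eps^2 \<cdot>\<^sub>m (G + t \<cdot>\<^sub>m G')" for t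
  have Wtc: "Wt t \<in> carrier_mat n n" for t using Gc by (simp add: Wt_def)
  have diff: "C0 - Ct t = t \<cdot>\<^sub>m Wt t" for t
  proof (rule eq_matI)
    fix a b assume "a < dim_row (t \<cdot>\<^sub>m Wt t)" "b < dim_col (t \<cdot>\<^sub>m Wt t)"
    hence ab: "a < n" "b < n" using Wtc[of t] by auto
    have l: "(C0 - Ct t) $$ (a,b) = C0 $$ (a,b) - Ct t $$ (a,b)" using ab carrier_matD[OF Ctc[of t]] by simp
    have r: "(t \<cdot>\<^sub>m Wt t) $$ (a,b) = t * (eps^2 * (G $$ (a,b) + t * G' $$ (a,b)))" using ab Gd by (simp add: Wt_def)
    have c0: "C0 $$ (a,b) = 1\<^sub>m n $$ (a,b) - eps^2 * Dm n H x $$ (a,b)" using Ctent[OF ab, of 0] Ct0 by simp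
    show "(C0 - Ct t) $$ (a,b) = (t \<cdot>\<^sub>m Wt t) $$ (a,b)"
      unfolding l r c0 Ctent[OF ab] by (simp add: algebra_simps)
  qed (use carrier_matD[OF Wtc[of t]] carrier_matD[OF Ctc[of t]] in simp_all)
  define h where "h t = (\<Sum>b\<in>{0..<n}. (\<Sum>a\<in>{0..<n}. ((1 / det (Ct t)) * adj_mat (Ct t) $$ (0,a)) *
      (eps^2 * (G $$ (a,b) + t * G' $$ (a,b)))) * E0 $$ (b,i))" for t
  have Etent: "Et t $$ (0,a) = (1 / det (Ct t)) * adj_mat (Ct t) $$ (0,a)" if "a < n" for t a
    unfolding Et_def Ct_def by (rule Einv_entry) (use that n in auto)
  have E0ent: "E0 $$ (0,a) = (1 / det C0) * adj_mat C0 $$ (0,a)" if "a < n" for a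
    unfolding E0_def C0_def by (rule Einv_entry) (use that n in auto)
  have prodent: "(Y * Z * E0) $$ (0,i) = (\<Sum>b\<in>{0..<n}. (\<Sum>a\<in>{0..<n}. Y $$ (0,a) * Z $$ (a,b)) * E0 $$ (b,i))"
    if Y: "Y \<in> carrier_mat n n" and Z: "Z \<in> carrier_mat n n" for Y Z
  proof -
    have YZ: "Y * Z \<in> carrier_mat n n" using Y Z by auto
    show ?thesis unfolding mult_entry[OF YZ E0c n i]
    proof (intro sum.cong refl)
      fix b assume "b \<in> {0..<n}"
      hence b: "b < n" by auto
      show "(Y * Z) $$ (0,b) * E0 $$ (b,i) = (\<Sum>a\<in>{0..<n}. Y $$ (0,a) * Z $$ (a,b)) * E0 $$ (b,i)"
        unfolding mult_entry[OF Y Z n b] ..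
    qed
  qed
  have hform: "(Et t * Wt t * E0) $$ (0,i) = h t" for t
    unfolding prodent[OF Etc Wtc] h_def
  proof (intro sum.cong refl)
    fix b assume "b \<in> {0..<n}"
    hence b: "b < n" by auto
    have "(\<Sum>a\<in>{0..<n}. Et t $$ (0,a) * Wt t $$ (a,b)) = (\<Sum>a\<in>{0..<n}. ((1 / det (Ct t)) * adj_mat (Ct t) $$ (0,a)) *
      (eps^2 * (G $$ (a,b) + t * G' $$ (a,b))))"
    proof (intro sum.cong refl)
      fix a assume "a \<in> {0..<n}"
      hence a: "a < n" by auto
      show "Et t $$ (0,a) * Wt t $$ (a,b) = ((1 / det (Ct t)) * adj_mat (Ct t) $$ (0,a)) * (eps^2 * (G $$ (a,b) + t * G' $$ (a,b)))"
        unfolding Etent[OF a] using a b Gd by (simp add: Wt_def)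
    qed
    thus "(\<Sum>a\<in>{0..<n}. Et t $$ (0,a) * Wt t $$ (a,b)) * E0 $$ (b,i) = (\<Sum>a\<in>{0..<n}. ((1 / det (Ct t)) * adj_mat (Ct t) $$ (0,a)) *
      (eps^2 * (G $$ (a,b) + t * G' $$ (a,b)))) * E0 $$ (b,i)" by simp
  qed
  have Et0: "Et 0 = E0" unfolding Et_def E0_def vec_zero_step[OF x] ..
  have CE: "C0 * E0 = 1\<^sub>m n" unfolding C0_def E0_def by (rule Einv_inv(2)[OF d0])
  have quot: "(Et t $$ (0,i) - Et 0 $$ (0,i)) / (t - 0) = h t" if "det (Ct t) \<noteq> 0 \<and> t \<noteq> 0" for t
  proof -
    have dt: "det (Ct t) \<noteq> 0" and t: "t \<noteq> 0" using that by auto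
    have dt': "det (Cm n H (x + t \<cdot>\<^sub>v unit_vec (2*n) k) eps) \<noteq> 0" using dt by (simp add: Ct_def)
    have EC: "Et t * Ct t = 1\<^sub>m n" unfolding Et_def Ct_def by (rule Einv_inv(1)[OF dt'])
    have "Et t - E0 = Et t * (C0 - Ct t) * E0" by (rule resolvent[OF C0c Ctc E0c Etc EC CE])
    also have "\<dots> = Et t * (t \<cdot>\<^sub>m Wt t) * E0" unfolding diff ..
    also have "Et t * (t \<cdot>\<^sub>m Wt t) = t \<cdot>\<^sub>m (Et t * Wt t)" by (rule mult_smult_distrib[OF Etc Wtc])
    also have "(t \<cdot>\<^sub>m (Et t * Wt t)) * E0 = t \<cdot>\<^sub>m (Et t * Wt t * E0)"
      by (rule mult_smult_assoc_mat[OF mult_carrier_mat[OF Etc Wtc] E0c])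
    finally have eq: "Et t - E0 = t \<cdot>\<^sub>m (Et t * Wt t * E0)" .
    have "(Et t - E0) $$ (0,i) = Et t $$ (0,i) - E0 $$ (0,i)"
      using carrier_matD[OF E0c] i n by simp
    moreover have "(t \<cdot>\<^sub>m (Et t * Wt t * E0)) $$ (0,i) = t * (Et t * Wt t * E0) $$ (0,i)"
      using carrier_matD[OF E0c] carrier_matD[OF Etc[of t]] i n by simp
    ultimately have "Et t $$ (0,i) - E0 $$ (0,i) = t * h t" using eq hform[of t] by simp
    thus ?thesis using t Et0 by simp
  qed
  define hv where "hv = (\<Sum>b\<in>{0..<n}. (\<Sum>a\<in>{0..<n}. ((1 / det C0) * adj_mat C0 $$ (0,a)) *
      (eps^2 * (G $$ (a,b) + 0 * G' $$ (a,b)))) * E0 $$ (b,i))"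
  have invlim: "((\<lambda>t. 1 / det (Ct t)) \<longlongrightarrow> 1 / det C0) (at 0)"
    by (rule tendsto_divide[OF tendsto_const detlim dC0])
  have hlim: "(h \<longlongrightarrow> hv) (at 0)"
    unfolding h_def hv_def
    by (intro tendsto_sum tendsto_mult tendsto_add tendsto_const tendsto_ident_at invlim adjlim) simp_all
  have hv_eq: "hv = (E0 * (eps^2 \<cdot>\<^sub>m G) * E0) $$ (0,i)"
    unfolding prodent[OF E0c smult_carrier_mat[OF Gc(1)]] hv_def
  proof (intro sum.cong refl)
    fix b assume "b \<in> {0..<n}"
    hence b: "b < n" by auto
    have "(\<Sum>a\<in>{0..<n}. ((1 / det C0) * adj_mat C0 $$ (0,a)) * (eps^2 * (G $$ (a,b) + 0 * G' $$ (a,b))))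
       = (\<Sum>a\<in>{0..<n}. E0 $$ (0,a) * (eps^2 \<cdot>\<^sub>m G) $$ (a,b))"
    proof (intro sum.cong refl)
      fix a assume "a \<in> {0..<n}"
      hence a: "a < n" by auto
      show "((1 / det C0) * adj_mat C0 $$ (0,a)) * (eps^2 * (G $$ (a,b) + 0 * G' $$ (a,b))) = E0 $$ (0,a) * (eps^2 \<cdot>\<^sub>m G) $$ (a,b)"
        unfolding E0ent[OF a] using a b Gd by simp
    qed
    thus "(\<Sum>a\<in>{0..<n}. ((1 / det C0) * adj_mat C0 $$ (0,a)) * (eps^2 * (G $$ (a,b) + 0 * G' $$ (a,b)))) * E0 $$ (b,i)
       = (\<Sum>a\<in>{0..<n}. E0 $$ (0,a) * (eps^2 \<cdot>\<^sub>m G) $$ (a,b)) * E0 $$ (b,i)" by simp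
  qed
  have "((\<lambda>t. (Et t $$ (0,i) - Et 0 $$ (0,i)) / (t - 0)) \<longlongrightarrow> hv) (at 0)"
    by (rule Lim_transform_eventually[OF hlim]) (use ev quot in \<open>auto elim: eventually_mono\<close>)
  hence "((\<lambda>t. Et t $$ (0,i)) has_real_derivative hv) (at 0)"
    by (simp add: has_field_derivative_iff)
  thus ?thesis unfolding hv_eq Et_def E0_def G_def .
qed

lemma Sx_shift: assumes k: "k < n" shows "Sx n (Suc k mod n) = Sx n k * Pshift n"
proof (rule eq_matI)
  have n: "n > 0" using k by auto
  fix i j assume "i < dim_row (Sx n k * Pshift n)" "j < dim_col (Sx n k * Pshift n)"
  hence i: "i < n" and j: "j < n" by (auto simp: Sx_def)
  define j' where "j' = nat ((int j - 1) mod int n)"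
  have j': "j' < n" using n by (simp add: j'_def nat_less_iff)
  have "(Sx n k * Pshift n) $$ (i,j) = Sx n k $$ (i, j')" unfolding j'_def by (rule YP) (use i j in auto)
  also have "\<dots> = (if (i + j') mod n = k then 1 else 0)"
  proof -
    have "(i + j') mod n < n" using n by simp
    hence "(i + j') mod n < 2 * n" by linarith
    thus ?thesis using i j' by (simp add: Sx_def Xmat_def unit_vec_def)
  qed
  also have "(i + j') mod n = k \<longleftrightarrow> (i + j) mod n = Suc k mod n"
  proof -
    have A: "int ((i + j') mod n) = (int i + int j - 1) mod int n"
      using n by (simp add: j'_def of_nat_mod mod_simps algebra_simps)
    have B: "((i + j) mod n = Suc k mod n) = (k = nat ((int ((i + j) mod n) - 1) mod int n))"
      by (rule mod_pred_iff) (use k n in auto)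
    have C: "(int ((i + j) mod n) - 1) mod int n = (int i + int j - 1) mod int n"
      by (simp add: of_nat_mod mod_simps algebra_simps)
    have "((i + j') mod n = k) = (int ((i + j') mod n) = int k)" by simp
    also have "\<dots> = ((int i + int j - 1) mod int n = int k)" unfolding A ..
    also have "\<dots> = (k = nat ((int i + int j - 1) mod int n))" using n by auto
    also have "\<dots> = ((i + j) mod n = Suc k mod n)" unfolding B C ..
    finally show ?thesis .
  qed
  also have "(if (i + j) mod n = Suc k mod n then 1 else 0) = Sx n (Suc k mod n) $$ (i,j)"
  proof -
    have "(i + j) mod n < n" using n by simp
    hence "(i + j) mod n < 2 * n" by linarith
    thus ?thesis using i j by (simp add: Sx_def Xmat_def unit_vec_def)
  qed
  finally show "Sx n (Suc k mod n) $$ (i,j) = (Sx n k * Pshift n) $$ (i,j)" by simp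
qed (auto simp: Sx_def)

lemma G1_shift: assumes adm: "admissible_hessian n H" and k: "k < n"
  shows "G1 n H x (Suc k mod n) = G1 n H x k * Pshift n"
proof -
  let ?X = "Xmat n x" and ?S = "Sx n k" and ?P = "Pshift n"
  let ?a = "hb2 n H * ?X" and ?b = "hb1 n H * ?X" and ?c = "hb4 n H * ?X"
  let ?al = "hb2 n H * ?S" and ?be = "hb1 n H * ?S" and ?ga = "hb4 n H * ?S"
  have c: "?a \<in> carrier_mat n n" "?b \<in> carrier_mat n n" "?c \<in> carrier_mat n n"
    "?al \<in> carrier_mat n n" "?be \<in> carrier_mat n n" "?ga \<in> carrier_mat n n"
    by (auto simp: mult_carrier_mat[of _ n n])
  note P = P_carrier[of n]
  have ca: "circulant n ?a" and cc: "circulant n ?c"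
    using hankel_mult admissible_blocks[OF adm] Xmat_hankel by auto
  have Pa: "?P * ?a = ?a * ?P" and Pc: "?P * ?c = ?c * ?P" using ca cc by (auto simp: circulant_def)
  have sh: "K * Sx n (Suc k mod n) = (K * ?S) * ?P" if K: "K \<in> carrier_mat n n" for K
    unfolding Sx_shift[OF k] by (rule assoc_mult_mat[symmetric, OF K Sx_carrier P])
  have t1: "(?al * ?P) * ?a = (?al * ?a) * ?P"
  proof -
    have "(?al * ?P) * ?a = ?al * (?P * ?a)" by (rule assoc_mult_mat[OF c(4) P c(1)])
    also have "\<dots> = ?al * (?a * ?P)" unfolding Pa ..
    also have "\<dots> = (?al * ?a) * ?P" by (rule assoc_mult_mat[symmetric, OF c(4) c(1) P])
    finally show ?thesis .
  qed
  have t2: "?a * (?al * ?P) = (?a * ?al) * ?P" by (rule assoc_mult_mat[symmetric, OF c(1) c(4) P])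
  have t3: "(?be * ?P) * ?c = (?be * ?c) * ?P"
  proof -
    have "(?be * ?P) * ?c = ?be * (?P * ?c)" by (rule assoc_mult_mat[OF c(5) P c(3)])
    also have "\<dots> = ?be * (?c * ?P)" unfolding Pc ..
    also have "\<dots> = (?be * ?c) * ?P" by (rule assoc_mult_mat[symmetric, OF c(5) c(3) P])
    finally show ?thesis .
  qed
  have t4: "?b * (?ga * ?P) = (?b * ?ga) * ?P" by (rule assoc_mult_mat[symmetric, OF c(2) c(6) P])
  have c2: "?al * ?a \<in> carrier_mat n n" "?a * ?al \<in> carrier_mat n n" "?be * ?c \<in> carrier_mat n n" "?b * ?ga \<in> carrier_mat n n"
    using c by (auto simp: mult_carrier_mat[of _ n n])
  have "G1 n H x (Suc k mod n) = ((?al * ?P) * ?a + ?a * (?al * ?P)) - ((?be * ?P) * ?c + ?b * (?ga * ?P))"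
    unfolding G1_def sh[OF hb_carrier(1)] sh[OF hb_carrier(2)] sh[OF hb_carrier(4)] ..
  also have "\<dots> = ((?al * ?a) * ?P + (?a * ?al) * ?P) - ((?be * ?c) * ?P + (?b * ?ga) * ?P)"
    unfolding t1 t2 t3 t4 ..
  also have "(?al * ?a) * ?P + (?a * ?al) * ?P = (?al * ?a + ?a * ?al) * ?P"
    by (rule add_mult_distrib_mat[symmetric, OF c2(1) c2(2) P])
  also have "(?be * ?c) * ?P + (?b * ?ga) * ?P = (?be * ?c + ?b * ?ga) * ?P"
    by (rule add_mult_distrib_mat[symmetric, OF c2(3) c2(4) P])
  also have "(?al * ?a + ?a * ?al) * ?P - (?be * ?c + ?b * ?ga) * ?P = ((?al * ?a + ?a * ?al) - (?be * ?c + ?b * ?ga)) * ?P"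
    by (rule minus_mult_distrib_mat[symmetric, OF add_carrier_mat[OF c2(2)] add_carrier_mat[OF c2(4)] P])
  finally show ?thesis unfolding G1_def .
qed

definition dE :: "nat \<Rightarrow> real mat \<Rightarrow> real vec \<Rightarrow> real \<Rightarrow> nat \<Rightarrow> real mat" where
  "dE n H x eps k = Einv n H x eps * (eps^2 \<cdot>\<^sub>m G1 n H x k) * Einv n H x eps"

lemma dE_shift: assumes adm: "admissible_hessian n H" and k: "k < n" and d: "det (Cm n H x eps) \<noteq> 0"
  shows "dE n H x eps (Suc k mod n) = dE n H x eps k * Pshift n"
proof -
  let ?E = "Einv n H x eps" and ?G = "eps^2 \<cdot>\<^sub>m G1 n H x k" and ?P = "Pshift n"
  have E: "?E \<in> carrier_mat n n" and G: "?G \<in> carrier_mat n n" and P: "?P \<in> carrier_mat n n" by auto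
  have PE: "?P * ?E = ?E * ?P" using circ_Einv[OF adm d] by (auto simp: circulant_def)
  have "eps^2 \<cdot>\<^sub>m G1 n H x (Suc k mod n) = ?G * ?P"
    unfolding G1_shift[OF adm k] by (rule mult_smult_assoc_mat[symmetric, OF G1_carrier P])
  hence "dE n H x eps (Suc k mod n) = ?E * (?G * ?P) * ?E" by (simp add: dE_def)
  also have "\<dots> = (?E * ?G) * (?P * ?E)"
    using E G P by (simp add: assoc_mult_mat[of _ n n _ n _ n] mult_carrier_mat[of _ n n _ n])
  also have "\<dots> = (?E * ?G) * (?E * ?P)" unfolding PE ..
  also have "\<dots> = dE n H x eps k * ?P"
    using E G P by (simp add: dE_def assoc_mult_mat[of _ n n _ n _ n] mult_carrier_mat[of _ n n _ n])
  finally show ?thesis .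
qed

definition sig :: "nat \<Rightarrow> nat \<Rightarrow> nat" where
  "sig n k = (if k < n then Suc k mod n else n + Suc (k - n) mod n)"

lemma Amat_entry: assumes k: "k < 2*n" and l: "l < 2*n"
  shows "Amat n $$ (k,l) = (if l = sig n k then 1 else 0)"
proof -
  have n: "n > 0" using k by auto
  have "Amat n $$ (k,l) = (if k < n then if l < n then Pshift n $$ (k,l) else 0
      else if l < n then 0 else Pshift n $$ (k - n, l - n))"
    unfolding Amat_def using k l by simp
  also have "\<dots> = (if l = sig n k then 1 else 0)"
    using k l n by (auto simp: P_entry sig_def)
  finally show ?thesis .
qed

lemma sig_lt: assumes "k < 2*n" shows "sig n k < 2*n"
proof -
  have n: "n > 0" using assms by auto
  have a: "Suc k mod n < n" and b: "Suc (k - n) mod n < n" using n by auto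
  show ?thesis
  proof (cases "k < n")
    case True hence "sig n k = Suc k mod n" by (simp add: sig_def)
    thus ?thesis using a by linarith
  next
    case False hence "sig n k = n + Suc (k - n) mod n" by (simp add: sig_def)
    thus ?thesis using b by linarith
  qed
qed

lemma Amat_mult_vec: assumes v: "v \<in> carrier_vec (2*n)" and k: "k < 2*n"
  shows "(Amat n *\<^sub>v v) $ k = v $ (sig n k)"
proof -
  have dA: "dim_row (Amat n) = 2*n" "dim_col (Amat n) = 2*n" using Amat_carrier[of n] unfolding carrier_mat_def by auto
  have "(Amat n *\<^sub>v v) $ k = (\<Sum>l\<in>{0..<2*n}. Amat n $$ (k,l) * v $ l)"
    using v k dA by (simp add: scalar_prod_def)
  also have "\<dots> = (\<Sum>l\<in>{0..<2*n}. if l = sig n k then v $ l else 0)"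
    by (rule sum.cong) (auto simp: Amat_entry[OF k])
  also have "\<dots> = v $ (sig n k)" using sig_lt[OF k] by simp
  finally show ?thesis .
qed

lemma dE_carrier: "dE n H x eps k \<in> carrier_mat n n"
  unfolding dE_def by (rule mult_carrier_mat[OF mult_carrier_mat[OF Einv_carrier smult_carrier_mat[OF G1_carrier]] Einv_carrier])

lemma inv_fb: assumes E: "E \<in> carrier_mat n n" and C: "C \<in> carrier_mat n n"
  and EC: "E * C = 1\<^sub>m n" and CE: "C * E = 1\<^sub>m n"
  shows "is_inverse_of (four_block_mat E (0\<^sub>m n n) (0\<^sub>m n n) E) (four_block_mat C (0\<^sub>m n n) (0\<^sub>m n n) (C :: real mat))"
proof -
  have 1: "four_block_mat E (0\<^sub>m n n) (0\<^sub>m n n) E * four_block_mat C (0\<^sub>m n n) (0\<^sub>m n n) C = 1\<^sub>m (n + n)"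
    by (subst mult_four_block_mat[OF E _ _ E C _ _ C]) (use E C EC in auto)
  have 2: "four_block_mat C (0\<^sub>m n n) (0\<^sub>m n n) C * four_block_mat E (0\<^sub>m n n) (0\<^sub>m n n) E = 1\<^sub>m (n + n)"
    by (subst mult_four_block_mat[OF C _ _ C E _ _ E]) (use E C CE in auto)
  show ?thesis unfolding is_inverse_of_def inverts_mat_def using 1 2 E C by simp
qed

lemma inv_unique: assumes B1: "B1 \<in> carrier_mat m m" and B2: "B2 \<in> carrier_mat m m" and M: "M \<in> carrier_mat m m"
  and i1: "is_inverse_of B1 M" and i2: "is_inverse_of B2 (M :: real mat)"
  shows "B1 = B2"
proof -
  have MB2: "M * B2 = 1\<^sub>m m" using i2 M by (simp add: is_inverse_of_def inverts_mat_def)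
  have B1M: "B1 * M = 1\<^sub>m m" using i1 B1 by (simp add: is_inverse_of_def inverts_mat_def)
  have "B1 = B1 * (M * B2)" using MB2 B1 by simp
  also have "\<dots> = (B1 * M) * B2" using B1 M B2 by (simp add: assoc_mult_mat[of _ m m _ m _ m])
  also have "\<dots> = B2" using B1M B2 by simp
  finally show ?thesis .
qed

lemma Einv_const: assumes x: "x \<in> carrier_vec (2*n)" and k: "k < 2*n" and kn: "\<not> k < n"
  shows "Einv n H (x + t \<cdot>\<^sub>v unit_vec (2*n) k) eps = Einv n H x eps"
  unfolding Einv_def Cm_def Dm_def Xmat_const[OF x k kn] ..

theorem mainTheorem20:
  fixes n :: nat and H :: "real mat"
  assumes "n \<ge> 2"
    and "admissible_hessian n H"
  shows "\<exists>r :: nat \<Rightarrow> real vec \<Rightarrow> real \<Rightarrow> real.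
     (\<forall>x eps. x \<in> carrier_vec (2*n) \<and> invertible_mat (Mmat n H x eps) \<longrightarrow>
        is_inverse_of (pow_comb (\<lambda>i. r i x eps) (Amat n) n) (Mmat n H x eps)
        \<and> (\<forall>c. is_inverse_of (pow_comb c (Amat n) n) (Mmat n H x eps)
                 \<longrightarrow> (\<forall>i<n. c i = r i x eps))
        \<and> (\<forall>i\<in>{1..<n}. \<exists>g. has_gradient (\<lambda>y. r i y eps) (2*n) x g
                 \<and> has_gradient (\<lambda>y. r (i - 1) y eps) (2*n) x (Amat n *\<^sub>v g)))"
proof (intro exI[of _ "\<lambda>i y eps. Einv n H y eps $$ (0,i)"] allI impI, elim conjE)
  fix x eps assume x: "x \<in> carrier_vec (2*n)" and inv: "invertible_mat (Mmat n H x eps)"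
  note adm = assms(2)
  have n: "n > 0" using assms(1) by auto
  have d: "det (Cm n H x eps) \<noteq> 0" by (rule det_Cm_nz[OF adm inv])
  let ?E = "Einv n H x eps" and ?C = "Cm n H x eps"
  have E: "?E \<in> carrier_mat n n" and C: "?C \<in> carrier_mat n n" by auto
  have cE: "circulant n ?E" by (rule circ_Einv[OF adm d])
  have PC: "pow_comb (\<lambda>i. ?E $$ (0,i)) (Amat n) n = four_block_mat ?E (0\<^sub>m n n) (0\<^sub>m n n) ?E"
    unfolding pow_comb_Wc Wc_circ[OF cE] ..
  have MB: "Mmat n H x eps = four_block_mat ?C (0\<^sub>m n n) (0\<^sub>m n n) ?C" by (rule Mmat_block[OF adm])
  have isinv: "is_inverse_of (pow_comb (\<lambda>i. ?E $$ (0,i)) (Amat n) n) (Mmat n H x eps)"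
    unfolding PC MB by (rule inv_fb[OF E C Einv_inv[OF d]])
  show "is_inverse_of (pow_comb (\<lambda>i. ?E $$ (0,i)) (Amat n) n) (Mmat n H x eps) \<and>
    (\<forall>c. is_inverse_of (pow_comb c (Amat n) n) (Mmat n H x eps) \<longrightarrow> (\<forall>i<n. c i = ?E $$ (0,i))) \<and>
    (\<forall>i\<in>{1..<n}. \<exists>g. has_gradient (\<lambda>y. Einv n H y eps $$ (0,i)) (2 * n) x g \<and>
        has_gradient (\<lambda>y. Einv n H y eps $$ (0,i - 1)) (2 * n) x (Amat n *\<^sub>v g))"
  proof (intro conjI allI impI ballI)
    show "is_inverse_of (pow_comb (\<lambda>i. ?E $$ (0,i)) (Amat n) n) (Mmat n H x eps)" by (rule isinv)
  next
    fix c i assume ic: "is_inverse_of (pow_comb c (Amat n) n) (Mmat n H x eps)" and i: "i < n"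
    have cM: "Mmat n H x eps \<in> carrier_mat (n+n) (n+n)" unfolding MB using C by auto
    have c1: "pow_comb c (Amat n) n \<in> carrier_mat (n+n) (n+n)" unfolding pow_comb_Wc by (auto simp: Wc_def)
    have c2: "pow_comb (\<lambda>i. ?E $$ (0,i)) (Amat n) n \<in> carrier_mat (n+n) (n+n)" unfolding pow_comb_Wc by (auto simp: Wc_def)
    have eq: "pow_comb c (Amat n) n = pow_comb (\<lambda>i. ?E $$ (0,i)) (Amat n) n"
      by (rule inv_unique[OF c1 c2 cM ic isinv])
    have "c i = pow_comb c (Amat n) n $$ (0,i)"
      unfolding pow_comb_Wc using i n by (simp add: Wc_entry0 Wc_def)
    also have "\<dots> = pow_comb (\<lambda>i. ?E $$ (0,i)) (Amat n) n $$ (0,i)" unfolding eq ..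
    also have "\<dots> = ?E $$ (0,i)"
      unfolding pow_comb_Wc using i n by (simp add: Wc_def)
    finally show "c i = ?E $$ (0,i)" .
  next
    fix i assume "i \<in> {1..<n}"
    hence i1: "1 \<le> i" and i: "i < n" by auto
    have im: "i - 1 < n" using i by auto
    define g where "g = vec (2*n) (\<lambda>k. if k < n then dE n H x eps k $$ (0,i) else 0)"
    have gc: "g \<in> carrier_vec (2*n)" by (simp add: g_def)
    have D1: "((\<lambda>t. Einv n H (x + t \<cdot>\<^sub>v unit_vec (2*n) k) eps $$ (0,j)) has_real_derivative
        (if k < n then dE n H x eps k $$ (0,j) else 0)) (at 0)" if k: "k < 2*n" and j: "j < n" for k j
    proof (cases "k < n")
      case True
      thus ?thesis using deriv_Einv[OF x True j d] by (simp add: dE_def)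
    next
      case False
      thus ?thesis unfolding Einv_const[OF x k False] by simp
    qed
    have "has_gradient (\<lambda>y. Einv n H y eps $$ (0,i)) (2 * n) x g"
      unfolding has_gradient_def
    proof (intro conjI allI impI)
      show "dim_vec g = 2*n" by (simp add: g_def)
      fix k assume k: "k < 2*n"
      show "((\<lambda>t. Einv n H (x + t \<cdot>\<^sub>v unit_vec (2*n) k) eps $$ (0,i)) has_real_derivative g $ k) (at 0)"
        using D1[OF k i] k by (simp add: g_def)
    qed
    moreover have "has_gradient (\<lambda>y. Einv n H y eps $$ (0,i - 1)) (2 * n) x (Amat n *\<^sub>v g)"
      unfolding has_gradient_def
    proof (intro conjI allI impI)
      show "dim_vec (Amat n *\<^sub>v g) = 2*n" using Amat_carrier[of n] unfolding carrier_mat_def by simp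
      fix k assume k: "k < 2*n"
      have Ag: "(Amat n *\<^sub>v g) $ k = g $ (sig n k)" by (rule Amat_mult_vec[OF gc k])
      have val: "(if k < n then dE n H x eps k $$ (0,i - 1) else 0) = (Amat n *\<^sub>v g) $ k"
      proof (cases "k < n")
        case True
        have s: "sig n k = Suc k mod n" using True by (simp add: sig_def)
        have sl: "Suc k mod n < n" using n by simp
        have "g $ (sig n k) = dE n H x eps (Suc k mod n) $$ (0,i)"
          unfolding s using sl by (simp add: g_def)
        also have "\<dots> = (dE n H x eps k * Pshift n) $$ (0,i)" unfolding dE_shift[OF adm True d] ..
        also have "\<dots> = dE n H x eps k $$ (0, nat ((int i - 1) mod int n))"
          by (rule YP[OF dE_carrier n i])
        also have "nat ((int i - 1) mod int n) = i - 1" using i1 i by (simp add: of_nat_diff)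
        finally show ?thesis using Ag True by simp
      next
        case False
        have s: "sig n k = n + Suc (k - n) mod n" using False by (simp add: sig_def)
        have "g $ (sig n k) = 0" using sig_lt[OF k] s by (simp add: g_def)
        thus ?thesis using Ag False by simp
      qed
      show "((\<lambda>t. Einv n H (x + t \<cdot>\<^sub>v unit_vec (2*n) k) eps $$ (0,i - 1)) has_real_derivative (Amat n *\<^sub>v g) $ k) (at 0)"
        using D1[OF k im] unfolding val .
    qed
    ultimately show "\<exists>g. has_gradient (\<lambda>y. Einv n H y eps $$ (0,i)) (2 * n) x g \<and>
        has_gradient (\<lambda>y. Einv n H y eps $$ (0,i - 1)) (2 * n) x (Amat n *\<^sub>v g)" by blast
  qed
qed

end
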